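(* There is a universal constant $C>0$ such that the following holds. Let $m\ge2$, $n\ge0$ be integers and $p,q\in[0,1]$ with $mp\ge 64\log m$ and $p\le2/3$. Let $X\sim\mathrm{Binom}(m,p)$ and $Y\sim\mathrm{Binom}(n,q)$ be independent. Then for any $\ell$ with $1\le\ell\le\sqrt{mp\log m}$, \[ \Pr(Y\ge X+\ell)\ge\Pr(Y\ge X)\exp\Big(-C\ell\sqrt{\tfrac{\log m}{mp}}\Big)-2m^{-2}, \] \[ \Pr(Y\ge X-\ell)\le\Pr(Y\ge X)\exp\Big(C\ell\sqrt{\tfrac{\log m}{mp}}\Big)+2m^{-2}. \] *)

theory Defs
  imports "HOL-Probability.Probability"
begin

definition indep_binoms :: "nat \<Rightarrow> real \<Rightarrow> nat \<Rightarrow> real \<Rightarrow> (nat \<times> nat) pmf" where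
  "indep_binoms m p n q = pair_pmf (binomial_pmf m p) (binomial_pmf n q)"

end

theory Submission
  imports Defs
begin

lemma decomp:
  fixes A :: "nat pmf" and B :: "nat pmf"
  assumes "set_pmf A \<subseteq> {..m}"
  shows "measure_pmf.prob (pair_pmf A B) S = (\<Sum>x\<le>m. pmf A x * measure_pmf.prob B {y. (x,y)\<in>S})"
proof -
  let ?M = "pair_pmf A B"
  let ?S' = "S \<inter> ({..m} \<times> UNIV)"
  have "measure_pmf.prob ?M (S \<inter> set_pmf ?M) \<le> measure_pmf.prob ?M ?S'"
    using assms by (intro measure_pmf.finite_measure_mono) auto
  moreover have "measure_pmf.prob ?M ?S' \<le> measure_pmf.prob ?M S"
    by (intro measure_pmf.finite_measure_mono) auto
  moreover have "measure_pmf.prob ?M (S \<inter> set_pmf ?M) = measure_pmf.prob ?M S"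
    by (rule measure_Int_set_pmf)
  ultimately have 1: "measure_pmf.prob ?M S = measure_pmf.prob ?M ?S'"
    by linarith
  have 2: "?S' = (\<Union>x\<in>{..m}. {x} \<times> {y. (x,y)\<in>S})" by auto
  have "measure_pmf.prob ?M (\<Union>x\<in>{..m}. {x} \<times> {y. (x,y)\<in>S}) = (\<Sum>x\<le>m. measure_pmf.prob ?M ({x} \<times> {y. (x,y)\<in>S}))"
    by (intro measure_pmf.finite_measure_finite_Union) (auto simp: disjoint_family_on_def)
  also have "\<dots> = (\<Sum>x\<le>m. pmf A x * measure_pmf.prob B {y. (x,y)\<in>S})"
    by (intro sum.cong refl) (simp add: measure_pmf_prob_product measure_pmf_single)
  finally show ?thesis using 1 2 by simp
qed


lemma mgf:
  assumes "0 \<le> p" "p \<le> 1"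
  shows "(\<Sum>k\<le>m. pmf (binomial_pmf m p) k * exp (a * real k)) = (1 - p + p * exp a)^m"
proof -
  have "(1 - p + p * exp a)^m = (p * exp a + (1 - p))^m" by (simp add: algebra_simps)
  also have "\<dots> = (\<Sum>k\<le>m. of_nat (m choose k) * (p * exp a)^k * (1-p)^(m-k))"
    by (rule binomial_ring)
  also have "\<dots> = (\<Sum>k\<le>m. pmf (binomial_pmf m p) k * exp (a * real k))"
    using assms by (intro sum.cong refl) (simp add: power_mult_distrib exp_of_nat_mult[symmetric] mult.commute mult.left_commute)
  finally show ?thesis by simp
qed

lemma mgf_bound:
  assumes "0 \<le> p" "p \<le> 1"
  shows "(\<Sum>k\<le>m. pmf (binomial_pmf m p) k * exp (a * real k)) \<le> exp (real m * p * (exp a - 1))"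
proof -
  have "(1 - p + p * exp a)^m \<le> exp (p * (exp a - 1))^m"
    apply (rule power_mono)
    using exp_ge_add_one_self[of "p * (exp a - 1)"] apply (simp add: algebra_simps)
    using assms by (smt (verit) exp_gt_zero mult_nonneg_nonneg)
  also have "\<dots> = exp (real m * p * (exp a - 1))"
    by (simp add: exp_of_nat_mult[symmetric] mult.assoc)
  finally show ?thesis using mgf[OF assms] by simp
qed

lemma exp_neg_le: assumes "0 \<le> (x::real)" shows "exp (-x) \<le> 1 - x + x^2"
proof -
  have c: "1 - x + x^2 = (x - 1/2)^2 + 3/4" by (simp add: power2_eq_square algebra_simps)
  have c0: "0 \<le> 1 - x + x^2" unfolding c by (simp add: add_nonneg_nonneg)
  have "(1 + x) * (1 - x + x^2) = 1 + x^3" by (simp add: algebra_simps power2_eq_square power3_eq_cube)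
  hence "1 \<le> (1 + x) * (1 - x + x^2)" using assms by (simp add: zero_le_power)
  also have "\<dots> \<le> exp x * (1 - x + x^2)"
    by (rule mult_right_mono[OF exp_ge_add_one_self c0])
  finally have 1: "1 \<le> exp x * (1 - x + x^2)" .
  have "exp (-x) = exp (-x) * 1" by simp
  also have "\<dots> \<le> exp (-x) * (exp x * (1 - x + x^2))" by (rule mult_left_mono[OF 1]) simp
  also have "\<dots> = 1 - x + x^2" by (simp add: mult.assoc[symmetric] exp_add[symmetric])
  finally show ?thesis .
qed

lemma upper_tail:
  assumes "0 \<le> p" "p \<le> 1" and mu: "real m * p > 0" and t: "0 \<le> t" "t \<le> 2 * (real m * p)"
  shows "(\<Sum>k\<in>{k. k \<le> m \<and> real k \<ge> real m * p + t}. pmf (binomial_pmf m p) k) \<le> exp (- (t^2) / (4 * (real m * p)))"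
proof -
  define \<mu> where "\<mu> = real m * p"
  define a where "a = t / (2 * \<mu>)"
  have a0: "0 \<le> a" and a1: "a \<le> 1" using mu t by (auto simp: a_def \<mu>_def field_simps)
  have "(\<Sum>k\<in>{k. k \<le> m \<and> real k \<ge> \<mu> + t}. pmf (binomial_pmf m p) k)
      \<le> (\<Sum>k\<in>{k. k \<le> m \<and> real k \<ge> \<mu> + t}. pmf (binomial_pmf m p) k * exp (a * (real k - (\<mu> + t))))"
    by (intro sum_mono) (auto intro!: mult_left_mono[where c="pmf _ _", of 1, simplified] simp: a0)
  also have "\<dots> \<le> (\<Sum>k\<le>m. pmf (binomial_pmf m p) k * exp (a * (real k - (\<mu> + t))))"
    by (intro sum_mono2) auto
  also have "\<dots> = (\<Sum>k\<le>m. pmf (binomial_pmf m p) k * exp (a * real k)) * exp (- a * (\<mu> + t))"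
    unfolding sum_distrib_right by (intro sum.cong refl) (simp add: mult.assoc exp_add[symmetric] algebra_simps)
  also have "\<dots> \<le> exp (\<mu> * (exp a - 1)) * exp (- a * (\<mu> + t))"
    using mgf_bound[OF assms(1,2), of m a] by (simp add: \<mu>_def)
  also have "\<dots> = exp (\<mu> * (exp a - 1) - a * (\<mu> + t))" by (simp add: exp_add[symmetric])
  also have "\<dots> \<le> exp (\<mu> * (a + a^2) - a * (\<mu> + t))"
    using exp_bound[OF a0 a1] mu by (simp add: \<mu>_def mult_left_mono)
  also have "\<mu> * (a + a^2) - a * (\<mu> + t) = - (t^2) / (4 * \<mu>)"
    using mu by (simp add: a_def \<mu>_def field_simps power2_eq_square)
  finally show ?thesis by (simp add: \<mu>_def)
qed

lemma lower_tail:
  assumes "0 \<le> p" "p \<le> 1" and mu: "real m * p > 0" and t: "0 \<le> t" "t \<le> 2 * (real m * p)"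
  shows "(\<Sum>k\<in>{k. k \<le> m \<and> real k \<le> real m * p - t}. pmf (binomial_pmf m p) k) \<le> exp (- (t^2) / (4 * (real m * p)))"
proof -
  define \<mu> where "\<mu> = real m * p"
  define a where "a = t / (2 * \<mu>)"
  have a0: "0 \<le> a" and a1: "a \<le> 1" using mu t by (auto simp: a_def \<mu>_def field_simps)
  have "(\<Sum>k\<in>{k. k \<le> m \<and> real k \<le> \<mu> - t}. pmf (binomial_pmf m p) k)
      \<le> (\<Sum>k\<in>{k. k \<le> m \<and> real k \<le> \<mu> - t}. pmf (binomial_pmf m p) k * exp (a * ((\<mu> - t) - real k)))"
    by (intro sum_mono) (auto intro!: mult_left_mono[where c="pmf _ _", of 1, simplified] simp: a0)
  also have "\<dots> \<le> (\<Sum>k\<le>m. pmf (binomial_pmf m p) k * exp (a * ((\<mu> - t) - real k)))"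
    by (intro sum_mono2) auto
  also have "\<dots> = (\<Sum>k\<le>m. pmf (binomial_pmf m p) k * exp ((-a) * real k)) * exp (a * (\<mu> - t))"
    unfolding sum_distrib_right by (intro sum.cong refl) (simp add: mult.assoc exp_add[symmetric] algebra_simps)
  also have "\<dots> \<le> exp (\<mu> * (exp (-a) - 1)) * exp (a * (\<mu> - t))"
    using mgf_bound[OF assms(1,2), of m "-a"] by (simp add: \<mu>_def)
  also have "\<dots> = exp (\<mu> * (exp (-a) - 1) + a * (\<mu> - t))" by (simp add: exp_add[symmetric])
  also have "\<dots> \<le> exp (\<mu> * (- a + a^2) + a * (\<mu> - t))"
    using exp_neg_le[OF a0] mu by (simp add: \<mu>_def mult_left_mono)
  also have "\<mu> * (- a + a^2) + a * (\<mu> - t) = - (t^2) / (4 * \<mu>)"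
    using mu by (simp add: a_def \<mu>_def field_simps power2_eq_square)
  finally show ?thesis by (simp add: \<mu>_def)
qed


lemma ratio_real:
  fixes \<mu> p \<delta> j m :: real
  assumes p: "0 < p" "p \<le> 2/3" and d: "0 \<le> \<delta>" "\<delta> \<le> 1/8" "1 \<le> \<delta> * \<mu>"
    and mu: "\<mu> = m * p" and j: "j \<ge> \<mu> * (1 - 5*\<delta>)"
  shows "(m - j + 1) * p \<le> exp (48*\<delta>) * j * (1 - p)"
proof -
  have mupos: "\<mu> > 0"
  proof (rule ccontr)
    assume "\<not> \<mu> > 0"
    then have "\<delta> * \<mu> \<le> 0" using d(1) by (simp add: mult_nonneg_nonpos)
    then show False using d(3) by simp
  qed
  have "(m - j + 1) * p \<le> (m - \<mu> * (1 - 5*\<delta>) + 1) * p"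
    using j p by (intro mult_right_mono) auto
  also have "\<dots> = \<mu> * (1-p) + (5*\<delta>*\<mu> + 1) * p" using mu by (simp add: algebra_simps)
  also have "\<dots> \<le> \<mu> * (1-p) + (6*\<delta>*\<mu>) * p" using d p by (intro add_left_mono mult_right_mono) auto
  also have "\<dots> \<le> \<mu> * (1-p) + (6*\<delta>*\<mu>) * (2*(1-p))"
    using d p mupos by (intro add_left_mono mult_left_mono) auto
  also have "\<dots> = \<mu> * (1-p) * (1 + 12*\<delta>)" by (simp add: algebra_simps)
  also have "\<dots> \<le> \<mu> * (1-p) * ((1 - 5*\<delta>) * (1 + 48*\<delta>))"
  proof -
    have "(1 - 5*\<delta>) * (1 + 48*\<delta>) = 1 + 43*\<delta> - 240*\<delta>*\<delta>" by (simp add: algebra_simps)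
    moreover have "\<delta>*\<delta> \<le> \<delta> * (1/8)" by (rule mult_left_mono[OF d(2) d(1)])
    hence "240*\<delta>*\<delta> \<le> 30*\<delta>" by linarith
    ultimately have "1 + 12*\<delta> \<le> (1 - 5*\<delta>) * (1 + 48*\<delta>)" using d by linarith
    thus ?thesis using mupos p by (intro mult_left_mono) auto
  qed
  also have "\<dots> \<le> \<mu> * (1-p) * ((1 - 5*\<delta>) * exp (48*\<delta>))"
    using mupos p d exp_ge_add_one_self[of "48*\<delta>"] by (intro mult_left_mono) auto
  also have "\<dots> = exp (48*\<delta>) * (\<mu> * (1 - 5*\<delta>)) * (1 - p)" by (simp add: algebra_simps)
  also have "\<dots> \<le> exp (48*\<delta>) * j * (1 - p)"
    using j p by (intro mult_right_mono mult_left_mono) auto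
  finally show ?thesis .
qed

lemma pmf_ratio:
  assumes p: "0 \<le> p" "p \<le> 1" and i: "Suc i \<le> m"
  shows "pmf (binomial_pmf m p) (Suc i) * real (Suc i) * (1 - p) = pmf (binomial_pmf m p) i * real (m - i) * p"
proof -
  have c: "real (Suc i) * real (m choose Suc i) = real (m - i) * real (m choose i)"
    using binomial_absorption[of i m] binomial_absorb_comp[of m i] by (metis of_nat_mult)
  have e: "m - i = Suc (m - Suc i)" using i by simp
  have "pmf (binomial_pmf m p) (Suc i) * real (Suc i) * (1 - p)
      = (real (Suc i) * real (m choose Suc i)) * (p^i * p) * (1-p)^(m - Suc i) * (1 - p)"
    using p by (simp add: algebra_simps)
  also have "\<dots> = (real (m - i) * real (m choose i)) * p^i * ((1-p)^(m - Suc i) * (1 - p)) * p"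
    unfolding c by (simp add: algebra_simps)
  also have "\<dots> = pmf (binomial_pmf m p) i * real (m - i) * p"
    using p by (simp add: e algebra_simps)
  finally show ?thesis .
qed

lemma pmf_step:
  assumes p: "0 < p" "p \<le> 2/3" and d: "0 \<le> \<delta>" "\<delta> \<le> 1/8" "1 \<le> \<delta> * (real m * p)"
    and i: "Suc i \<le> m" "real (Suc i) \<ge> (real m * p) * (1 - 5*\<delta>)"
  shows "pmf (binomial_pmf m p) (Suc i) \<le> exp (48*\<delta>) * pmf (binomial_pmf m p) i"
proof -
  let ?F = "pmf (binomial_pmf m p)"
  have r: "?F (Suc i) * (real (Suc i) * (1 - p)) = ?F i * (real (m - i) * p)"
    using pmf_ratio[of p i m] p i by (simp add: mult.assoc)
  have q: "(real m - real (Suc i) + 1) * p \<le> exp (48*\<delta>) * real (Suc i) * (1 - p)"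
    by (rule ratio_real[OF p d refl i(2)])
  have mi: "real (m - i) = real m - real (Suc i) + 1" using i by (simp add: of_nat_diff)
  have "?F (Suc i) * (real (Suc i) * (1 - p)) \<le> ?F i * (exp (48*\<delta>) * real (Suc i) * (1 - p))"
    unfolding r mi by (intro mult_left_mono q) simp
  also have "\<dots> = (exp (48*\<delta>) * ?F i) * (real (Suc i) * (1 - p))" by (simp add: algebra_simps)
  finally show ?thesis using p by (subst (asm) mult_le_cancel_right_pos) auto
qed

lemma pmf_iter:
  assumes p: "0 < p" "p \<le> 2/3" and d: "0 \<le> \<delta>" "\<delta> \<le> 1/8" "1 \<le> \<delta> * (real m * p)"
  shows "L \<le> k \<Longrightarrow> k \<le> m \<Longrightarrow> real k - real L + 1 \<ge> (real m * p) * (1 - 5*\<delta>) \<Longrightarrow>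
     pmf (binomial_pmf m p) k \<le> exp (48*\<delta>)^L * pmf (binomial_pmf m p) (k - L)"
proof (induction L)
  case 0
  then show ?case by simp
next
  case (Suc L)
  have IH: "pmf (binomial_pmf m p) k \<le> exp (48*\<delta>)^L * pmf (binomial_pmf m p) (k - L)"
    using Suc by simp
  have e: "k - L = Suc (k - Suc L)" using Suc by simp
  have "pmf (binomial_pmf m p) (Suc (k - Suc L)) \<le> exp (48*\<delta>) * pmf (binomial_pmf m p) (k - Suc L)"
    apply (rule pmf_step[OF p d])
    using Suc by (auto simp: of_nat_diff)
  hence "pmf (binomial_pmf m p) (k - L) \<le> exp (48*\<delta>) * pmf (binomial_pmf m p) (k - Suc L)"
    using e by simp
  hence 2: "exp (48*\<delta>)^L * pmf (binomial_pmf m p) (k - L) \<le> exp (48*\<delta>)^L * (exp (48*\<delta>) * pmf (binomial_pmf m p) (k - Suc L))"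
    by (intro mult_left_mono) auto
  show ?case using order_trans[OF IH 2] by (simp add: algebra_simps)
qed



lemma main_bounds:
  fixes m n :: nat and p q l :: real
  assumes m2: "m \<ge> 2" and p0: "0 \<le> p" and p1: "p \<le> 1" and q0: "0 \<le> q" and q1: "q \<le> 1"
    and mp: "real m * p \<ge> 64 * ln (real m)" and p23: "p \<le> 2/3"
    and l1: "1 \<le> l" and ls: "l \<le> sqrt (real m * p * ln (real m))"
  shows "measure_pmf.prob (indep_binoms m p n q) {(x, y). real y \<ge> real x + l}
           \<ge> measure_pmf.prob (indep_binoms m p n q) {(x, y). real y \<ge> real x}
               * exp (- 100 * l * sqrt (ln (real m) / (real m * p))) - 2 / (real m)\<^sup>2
       \<and> measure_pmf.prob (indep_binoms m p n q) {(x, y). real y \<ge> real x - l}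
           \<le> measure_pmf.prob (indep_binoms m p n q) {(x, y). real y \<ge> real x}
               * exp (100 * l * sqrt (ln (real m) / (real m * p))) + 2 / (real m)\<^sup>2"
proof -
  define \<mu> where "\<mu> = real m * p"
  define lm where "lm = ln (real m)"
  define \<delta> where "\<delta> = sqrt (lm / \<mu>)"
  define s where "s = \<mu> * \<delta>"
  define t where "t = 3 * s"
  define F where "F = pmf (binomial_pmf m p)"
  define H where "H = (\<lambda>r::real. measure_pmf.prob (binomial_pmf n q) {y. real y \<ge> r})"
  have lm_pos: "lm > 0" using m2 by (simp add: lm_def)
  have "exp (1/8::real) \<le> 1 + 1/8 + (1/8)^2" by (rule exp_bound) auto
  also have "\<dots> \<le> real m"
  proof -
    have "(2::real) \<le> real m" using m2 by simp
    thus ?thesis by (simp add: power2_eq_square)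
  qed
  finally have e8: "exp (1/8::real) \<le> real m" .
  have "ln (exp (1/8::real)) \<le> ln (real m)"
    using ln_le_cancel_iff[of "exp (1/8)" "real m"] e8 m2 by simp
  hence lm8: "lm \<ge> 1/8" by (simp add: lm_def)
  have mu64: "\<mu> \<ge> 64 * lm" using mp by (simp add: \<mu>_def lm_def)
  have mupos: "\<mu> > 0" using mu64 lm_pos by linarith
  have ppos: "p > 0" using mupos p0 by (cases "p = 0") (auto simp: \<mu>_def)
  have plt1: "p < 1" using p23 by simp
  have d0: "\<delta> \<ge> 0" using lm_pos mupos by (simp add: \<delta>_def)
  have d2: "\<delta>^2 = lm / \<mu>" unfolding \<delta>_def using lm_pos mupos by (intro real_sqrt_pow2) simp
  have "lm / \<mu> \<le> (1/8)^2" using mu64 pos_divide_le_eq[OF mupos, of lm "(1/8)^2"] by (simp add: power2_eq_square)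
  hence "\<delta>^2 \<le> (1/8)^2" using d2 by simp
  hence d8: "\<delta> \<le> 1/8" by (rule power2_le_imp_le) simp
  have s0: "s \<ge> 0" using d0 mupos by (simp add: s_def)
  have s2: "s^2 = \<mu> * lm"
  proof -
    have "s^2 = \<mu>^2 * \<delta>^2" by (simp add: s_def power_mult_distrib)
    also have "\<dots> = \<mu> * lm" using mupos unfolding d2 by (simp add: power2_eq_square)
    finally show ?thesis .
  qed
  have s_sqrt: "sqrt (real m * p * ln (real m)) = s"
    unfolding \<mu>_def[symmetric] lm_def[symmetric] by (rule real_sqrt_unique[OF s2 s0])
  have "s^2 \<ge> 1^2"
  proof -
    have "lm * lm \<ge> (1/8) * (1/8)" using lm8 by (intro mult_mono) auto
    moreover have "\<mu> * lm \<ge> (64 * lm) * lm" using mult_right_mono[OF mu64, of lm] lm_pos by simp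
    ultimately show ?thesis using s2 by simp
  qed
  hence s1: "s \<ge> 1" by (rule power2_le_imp_le) (rule s0)
  have ds: "1 \<le> \<delta> * \<mu>" using s1 by (simp add: s_def mult.commute)
  have s_mu: "s \<le> \<mu> / 8" using d8 mupos by (simp add: s_def)
  have sq: "sqrt (ln (real m) / (real m * p)) = \<delta>" by (simp add: \<delta>_def lm_def \<mu>_def)
  have m0: "real m > 0" using m2 by simp


  have expbound: "exp (- (t^2) / (4 * \<mu>)) \<le> 1 / (real m)^2"
  proof -
    have t2: "t^2 = 9 * (\<mu> * lm)" unfolding t_def power_mult_distrib s2 by simp
    have "9 * (\<mu> * lm) / (4 * \<mu>) = 9/4 * lm" using mupos by simp
    hence "t^2 / (4*\<mu>) = 9/4 * lm" unfolding t2 .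
    hence "- (t^2) / (4 * \<mu>) \<le> - (2 * lm)" using lm_pos by (simp only: minus_divide_left)
    hence "exp (- (t^2) / (4 * \<mu>)) \<le> exp (- (2 * lm))" by simp
    also have "exp (2 * lm) = real m * real m"
      unfolding mult_2 exp_add lm_def using m0 by simp
    hence "exp (- (2 * lm)) = 1 / (real m)^2" by (simp add: exp_minus power2_eq_square inverse_eq_divide)
    finally show ?thesis .
  qed
  define Gs where "Gs = {k. k \<le> m \<and> \<mu> - t < real k \<and> real k < \<mu> + t}"
  define Bs where "Bs = {..m} - Gs"
  define Up where "Up = {k. k \<le> m \<and> real k \<ge> real m * p + t}"
  define Lo where "Lo = {k. k \<le> m \<and> real k \<le> real m * p - t}"
  have t0: "0 \<le> t" and t2: "t \<le> 2 * (real m * p)" using s0 s_mu mupos by (auto simp: t_def \<mu>_def)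
  have Fnn: "\<And>k. F k \<ge> 0" by (simp add: F_def)
  have "sum F Up \<le> 1 / (real m)^2"
    using upper_tail[OF p0 p1 _ t0 t2] mupos expbound by (simp add: Up_def F_def \<mu>_def)
  moreover have "sum F Lo \<le> 1 / (real m)^2"
    using lower_tail[OF p0 p1 _ t0 t2] mupos expbound by (simp add: Lo_def F_def \<mu>_def)
  moreover have "sum F Bs \<le> sum F (Up \<union> Lo)"
    by (intro sum_mono2) (auto simp: Bs_def Gs_def Up_def Lo_def \<mu>_def Fnn)
  moreover have "sum F (Up \<union> Lo) \<le> sum F Up + sum F Lo"
  proof -
    have "sum F (Up \<union> Lo) = sum F Up + sum F Lo - sum F (Up \<inter> Lo)"
      by (rule sum_Un) (auto simp: Up_def Lo_def)
    moreover have "sum F (Up \<inter> Lo) \<ge> 0" by (intro sum_nonneg Fnn)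
    ultimately show ?thesis by linarith
  qed
  ultimately have bad: "sum F Bs \<le> 2 / (real m)^2" by simp
  have bad0: "sum F Bs \<ge> 0" by (intro sum_nonneg Fnn)

  have H0: "\<And>r. H r \<ge> 0" and H1: "\<And>r. H r \<le> 1" by (auto simp: H_def)
  have Hmono: "\<And>r1 r2. r1 \<le> r2 \<Longrightarrow> H r2 \<le> H r1"
    unfolding H_def by (intro measure_pmf.finite_measure_mono) auto

  have setA: "set_pmf (binomial_pmf m p) \<subseteq> {..m}" using ppos plt1 by simp
  have dec: "\<And>S. measure_pmf.prob (indep_binoms m p n q) S = (\<Sum>x\<le>m. F x * measure_pmf.prob (binomial_pmf n q) {y. (x,y)\<in>S})"
    unfolding indep_binoms_def F_def by (rule decomp[OF setA])
  have P0: "measure_pmf.prob (indep_binoms m p n q) {(x, y). real y \<ge> real x} = (\<Sum>x\<le>m. F x * H (real x))"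
    by (simp add: dec H_def)
  have P1: "measure_pmf.prob (indep_binoms m p n q) {(x, y). real y \<ge> real x + l} = (\<Sum>x\<le>m. F x * H (real x + l))"
    by (simp add: dec H_def)
  have P2: "measure_pmf.prob (indep_binoms m p n q) {(x, y). real y \<ge> real x - l} = (\<Sum>x\<le>m. F x * H (real x - l))"
    by (simp add: dec H_def)
  define P where "P = (\<Sum>x\<le>m. F x * H (real x))"
  have P_nn: "P \<ge> 0" unfolding P_def by (intro sum_nonneg mult_nonneg_nonneg Fnn H0)
  have Gs_sub: "Gs \<subseteq> {..m}" by (auto simp: Gs_def)
  have splitP: "\<And>g::nat\<Rightarrow>real. (\<Sum>x\<le>m. g x) = sum g Gs + sum g Bs"
    unfolding Bs_def using Gs_sub by (subst sum.subset_diff[of Gs]) (auto simp: add.commute)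
  have PG: "P \<le> (\<Sum>k\<in>Gs. F k * H (real k)) + sum F Bs"
  proof -
    have "(\<Sum>k\<in>Bs. F k * H (real k)) \<le> sum F Bs"
      by (intro sum_mono) (use H1 Fnn in \<open>auto intro: mult_left_le\<close>)
    thus ?thesis unfolding P_def splitP by simp
  qed
  have iter: "\<And>k L. k \<in> Gs \<Longrightarrow> real L \<le> 2 * s \<Longrightarrow> L \<le> k \<and> F k \<le> exp (48*\<delta>*real L) * F (k - L)"
  proof -
    fix k L assume k: "k \<in> Gs" and L: "real L \<le> 2 * s"
    have kr1: "\<mu> - 3 * s < real k" using k by (simp add: Gs_def t_def)
    have kr2: "k \<le> m" using k by (simp add: Gs_def)
    have "real L \<le> real k" using kr1 s_mu L by linarith
    hence Lk: "L \<le> k" by simp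
    have "real k - real L + 1 \<ge> (real m * p) * (1 - 5*\<delta>)"
    proof -
      have "(real m * p) * (1 - 5*\<delta>) = \<mu> - 5 * s" by (simp add: \<mu>_def s_def algebra_simps)
      thus ?thesis using kr1 L by linarith
    qed
    from pmf_iter[OF ppos p23 d0 d8 _ Lk kr2 this] ds
    have "F k \<le> exp (48*\<delta>)^L * F (k - L)" by (simp add: F_def \<mu>_def mult.commute)
    moreover have "exp (48*\<delta>)^L = exp (48*\<delta>*real L)" by (simp add: exp_of_nat_mult[symmetric] mult.commute)
    ultimately show "L \<le> k \<and> F k \<le> exp (48*\<delta>*real L) * F (k - L)" using Lk by simp
  qed

  have lower: "(\<Sum>x\<le>m. F x * H (real x + l)) \<ge> P * exp (- 100 * l * \<delta>) - 2 / (real m)\<^sup>2"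
  proof -
    define L where "L = nat \<lceil>l\<rceil>"
    have Ll: "real L \<ge> l" "real L \<le> l + 1" using l1 by (auto simp: L_def)
    have L2s: "real L \<le> 2 * s" using Ll ls s_sqrt s1 by simp
    define e where "e = exp (- (48*\<delta>*real L))"
    define g where "g = (\<lambda>k. F (k - L) * H (real k))"
    have GsL: "Gs \<subseteq> {0 + L..m + L}"
    proof
      fix k assume k: "k \<in> Gs"
      have "L \<le> k" using iter[OF k L2s] by simp
      moreover have "k \<le> m" using k by (simp add: Gs_def)
      ultimately show "k \<in> {0 + L..m + L}" by simp
    qed
    have "(\<Sum>x\<le>m. F x * H (real x + l)) \<ge> (\<Sum>x\<le>m. F x * H (real (x + L)))"
      by (intro sum_mono mult_left_mono Hmono) (use Ll Fnn in auto)
    also have "(\<Sum>x\<le>m. F x * H (real (x + L))) = (\<Sum>x=0..m. g (x + L))"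
      by (simp add: g_def atMost_atLeast0)
    also have "\<dots> = sum g {0 + L..m + L}" by (rule sum.shift_bounds_cl_nat_ivl[symmetric])
    also have "sum g {0 + L..m + L} \<ge> sum g Gs"
      by (rule sum_mono2[OF _ GsL]) (auto simp: g_def intro!: mult_nonneg_nonneg Fnn H0)
    also have "sum g Gs \<ge> (\<Sum>k\<in>Gs. e * (F k * H (real k)))"
    proof (intro sum_mono)
      fix k assume k: "k \<in> Gs"
      have "F k \<le> exp (48*\<delta>*real L) * F (k - L)" using iter[OF k L2s] by simp
      hence "e * F k \<le> e * (exp (48*\<delta>*real L) * F (k - L))" by (simp add: e_def)
      also have "\<dots> = F (k - L)" by (simp add: e_def mult.assoc[symmetric] exp_add[symmetric])
      finally have "e * F k * H (real k) \<le> F (k - L) * H (real k)" by (intro mult_right_mono H0)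
      thus "e * (F k * H (real k)) \<le> g k" by (simp add: g_def mult.assoc)
    qed
    also have "(\<Sum>k\<in>Gs. e * (F k * H (real k))) = e * (\<Sum>k\<in>Gs. F k * H (real k))"
      by (simp add: sum_distrib_left)
    finally have 1: "(\<Sum>x\<le>m. F x * H (real x + l)) \<ge> e * (\<Sum>k\<in>Gs. F k * H (real k))" .
    have e0: "e > 0" and e1: "e \<le> 1" using d0 by (auto simp: e_def)
    have "e * (P - sum F Bs) \<le> e * (\<Sum>k\<in>Gs. F k * H (real k))"
      using PG e0 by (intro mult_left_mono) auto
    moreover have "e * sum F Bs \<le> sum F Bs" by (rule mult_left_le_one_le[OF bad0 _ e1]) (use e0 in simp)
    moreover have "P * exp (- 100 * l * \<delta>) \<le> P * e"
    proof -
      have "48*\<delta>*real L \<le> 100 * l * \<delta>"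
      proof -
        have "48*real L \<le> 100*l" using Ll l1 by linarith
        hence "(48*real L)*\<delta> \<le> (100*l)*\<delta>" by (rule mult_right_mono) (rule d0)
        thus ?thesis by (simp add: ac_simps)
      qed
      thus ?thesis unfolding e_def using P_nn by (intro mult_left_mono) auto
    qed
    ultimately show ?thesis using 1 bad by (simp add: algebra_simps)
  qed

  have upper: "(\<Sum>x\<le>m. F x * H (real x - l)) \<le> P * exp (100 * l * \<delta>) + 2 / (real m)\<^sup>2"
  proof -
    define L where "L = nat \<lfloor>l\<rfloor>"
    have fl: "of_int \<lfloor>l\<rfloor> \<le> l" "\<lfloor>l\<rfloor> \<ge> 1" using l1 by (auto simp: le_floor_iff)
    have LL: "real L = of_int \<lfloor>l\<rfloor>" using fl by (simp add: L_def)
    have Ll: "real L \<le> l" using fl LL by simp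
    have L2s: "real L \<le> 2 * s" using Ll ls s_sqrt s1 by simp
    define E where "E = exp (48*\<delta>*real L)"
    have "(\<Sum>x\<le>m. F x * H (real x - l)) \<le> (\<Sum>x\<le>m. F x * H (real x - real L))"
    proof (intro sum_mono mult_left_mono Fnn)
      fix x assume "x \<in> {..m}"
      have "{y. real y \<ge> real x - l} \<subseteq> {y. real y \<ge> real x - real L}"
      proof
        fix y assume "y \<in> {y. real y \<ge> real x - l}"
        hence "of_int (int x - int y) \<le> l" by simp
        hence "int x - int y \<le> \<lfloor>l\<rfloor>" by (simp add: le_floor_iff)
        hence "real_of_int (int x - int y) \<le> of_int \<lfloor>l\<rfloor>" by (simp only: of_int_le_iff)
        thus "y \<in> {y. real y \<ge> real x - real L}" using LL by simp
      qed
      thus "H (real x - l) \<le> H (real x - real L)"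
        unfolding H_def by (intro measure_pmf.finite_measure_mono) auto
    qed
    also have "\<dots> = (\<Sum>x\<in>Gs. F x * H (real x - real L)) + (\<Sum>x\<in>Bs. F x * H (real x - real L))"
      by (rule splitP)
    also have "(\<Sum>x\<in>Bs. F x * H (real x - real L)) \<le> sum F Bs"
      by (intro sum_mono) (use H1 Fnn in \<open>auto intro: mult_left_le\<close>)
    also have "(\<Sum>x\<in>Gs. F x * H (real x - real L)) \<le> (\<Sum>x\<in>Gs. E * (F (x - L) * H (real (x - L))))"
    proof (intro sum_mono)
      fix x assume x: "x \<in> Gs"
      have Lx: "L \<le> x" and Fx: "F x \<le> E * F (x - L)" using iter[OF x L2s] by (auto simp: E_def)
      have "F x * H (real x - real L) \<le> E * F (x - L) * H (real x - real L)"
        by (intro mult_right_mono Fx H0)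
      thus "F x * H (real x - real L) \<le> E * (F (x - L) * H (real (x - L)))"
        using Lx by (simp add: of_nat_diff mult.assoc)
    qed
    also have "\<dots> = E * (\<Sum>x\<in>Gs. F (x - L) * H (real (x - L)))" by (simp add: sum_distrib_left)
    also have "(\<Sum>x\<in>Gs. F (x - L) * H (real (x - L))) = (\<Sum>j\<in>(\<lambda>x. x - L) ` Gs. F j * H (real j))"
    proof (rule sum.reindex[symmetric, unfolded comp_def])
      show "inj_on (\<lambda>x. x - L) Gs"
      proof (rule inj_onI)
        fix x y assume x: "x \<in> Gs" and y: "y \<in> Gs" and e: "x - L = y - L"
        have "L \<le> x" "L \<le> y" using iter[OF x L2s] iter[OF y L2s] by auto
        thus "x = y" using e by linarith
      qed
    qed
    also have "\<dots> \<le> P" unfolding P_def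
      by (intro sum_mono2) (use Gs_sub Fnn H0 in auto)
    finally have 2: "(\<Sum>x\<le>m. F x * H (real x - l)) \<le> E * P + sum F Bs"
      using E_def by (simp add: mult_left_mono)
    have "E * P \<le> exp (100 * l * \<delta>) * P"
    proof -
      have "48*\<delta>*real L \<le> 100 * l * \<delta>"
      proof -
        have "48*real L \<le> 100*l" using Ll l1 by linarith
        hence "(48*real L)*\<delta> \<le> (100*l)*\<delta>" by (rule mult_right_mono) (rule d0)
        thus ?thesis by (simp add: ac_simps)
      qed
      thus ?thesis unfolding E_def using P_nn by (intro mult_right_mono) auto
    qed
    thus ?thesis using 2 bad by (simp add: algebra_simps)
  qed
  show ?thesis
    unfolding P0 P1 P2 sq using lower upper by (simp add: P_def F_def)
qed

theorem proposition3p1: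
  "\<exists>C::real. C > 0 \<and>
     (\<forall>(m::nat) (n::nat) (p::real) (q::real) (l::real).
        m \<ge> 2 \<longrightarrow> 0 \<le> p \<longrightarrow> p \<le> 1 \<longrightarrow> 0 \<le> q \<longrightarrow> q \<le> 1 \<longrightarrow>
        real m * p \<ge> 64 * ln (real m) \<longrightarrow> p \<le> 2/3 \<longrightarrow>
        1 \<le> l \<longrightarrow> l \<le> sqrt (real m * p * ln (real m)) \<longrightarrow>
        (let M = indep_binoms m p n q;
             P0 = measure_pmf.prob M {(x, y). real y \<ge> real x}
         in measure_pmf.prob M {(x, y). real y \<ge> real x + l}
              \<ge> P0 * exp (- C * l * sqrt (ln (real m) / (real m * p))) - 2 / (real m)\<^sup>2
          \<and> measure_pmf.prob M {(x, y). real y \<ge> real x - l}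
              \<le> P0 * exp (C * l * sqrt (ln (real m) / (real m * p))) + 2 / (real m)\<^sup>2))"
proof (rule exI[of _ 100], intro conjI allI impI)
  show "(100::real) > 0" by simp
next
  fix m n :: nat and p q l :: real
  assume "m \<ge> 2" "0 \<le> p" "p \<le> 1" "0 \<le> q" "q \<le> 1" "real m * p \<ge> 64 * ln (real m)" "p \<le> 2/3"
    "1 \<le> l" "l \<le> sqrt (real m * p * ln (real m))"
  from main_bounds[OF this] show "let M = indep_binoms m p n q;
             P0 = measure_pmf.prob M {(x, y). real y \<ge> real x}
         in measure_pmf.prob M {(x, y). real y \<ge> real x + l}
              \<ge> P0 * exp (- 100 * l * sqrt (ln (real m) / (real m * p))) - 2 / (real m)\<^sup>2
          \<and> measure_pmf.prob M {(x, y). real y \<ge> real x - l}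
              \<le> P0 * exp (100 * l * sqrt (ln (real m) / (real m * p))) + 2 / (real m)\<^sup>2"
    unfolding Let_def by simp
qed

end
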